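(* Let $n\ge 4$ and let $S\subseteq\mathbb{Z}_n$ with $0\notin S$, $S=-S$, such that $\mathrm{Cay}(\mathbb{Z}_n,S)$ is connected, and let $k=|S|$. If $k$ divides $n$ and $s\not\equiv s'\pmod k$ for all distinct $s,s'\in S$, then $\mathrm{Cay}(\mathbb{Z}_n,S)$ admits a total perfect code.
   Context: Elements of $\mathbb{Z}_n$ are identified with integers in $\{0,1,\dots,n-1\}$. The circulant graph $\mathrm{Cay}(\mathbb{Z}_n,S)$ has vertex set $\mathbb{Z}_n$ with $u,v$ adjacent iff $v-u\in S$; its degree is $|S|$. A total perfect code in a graph $\Gamma=(V,E)$ is a subset $C\subseteq V$ such that every vertex of $V$ has exactly one neighbour in $C$. *)

theory Defs
  imports Main
begin

text \<open>Elements of Z_n are represented by the naturals 0,...,n-1.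
  The circulant graph Cay(Z_n, S): u, v adjacent iff (v - u) mod n is in S.\<close>

definition circ_adj :: "nat \<Rightarrow> nat set \<Rightarrow> nat \<Rightarrow> nat \<Rightarrow> bool" where
  "circ_adj n S u v \<longleftrightarrow> u < n \<and> v < n \<and> nat ((int v - int u) mod int n) \<in> S"

definition circ_symmetric :: "nat \<Rightarrow> nat set \<Rightarrow> bool" where
  "circ_symmetric n S \<longleftrightarrow> (\<forall>s\<in>S. (n - s) mod n \<in> S)"

definition circ_connected :: "nat \<Rightarrow> nat set \<Rightarrow> bool" where
  "circ_connected n S \<longleftrightarrow> (\<forall>u<n. \<forall>v<n. (circ_adj n S)\<^sup>*\<^sup>* u v)"

definition total_perfect_code :: "nat \<Rightarrow> nat set \<Rightarrow> nat set \<Rightarrow> bool" where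
  "total_perfect_code n S C \<longleftrightarrow> C \<subseteq> {0..<n} \<and>
     (\<forall>v<n. \<exists>!c. c \<in> C \<and> circ_adj n S v c)"

end

theory Submission
  imports Defs
begin

lemma surj_mod:
  assumes fin: "finite S" and k: "k = card S" and kpos: "k > 0"
    and inj: "\<forall>s\<in>S. \<forall>s'\<in>S. s \<noteq> s' \<longrightarrow> s mod k \<noteq> s' mod k"
    and r: "r < (k::nat)"
  shows "\<exists>s\<in>S. s mod k = r"
proof -
  have "inj_on (\<lambda>s. s mod k) S" using inj unfolding inj_on_def by blast
  then have "card ((\<lambda>s. s mod k) ` S) = k" using k card_image by blast
  moreover have "(\<lambda>s. s mod k) ` S \<subseteq> {0..<k}" using kpos by auto
  ultimately have "(\<lambda>s. s mod k) ` S = {0..<k}"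
    by (simp add: card_subset_eq)
  then show ?thesis using r by (metis atLeastLessThan_iff imageE zero_le)
qed

theorem lemma2p5:
  fixes n k :: nat and S :: "nat set"
  assumes "n \<ge> 4"
    and "S \<subseteq> {0..<n}"
    and "0 \<notin> S"
    and "circ_symmetric n S"
    and "circ_connected n S"
    and "k = card S"
    and "k dvd n"
    and "\<forall>s\<in>S. \<forall>s'\<in>S. s \<noteq> s' \<longrightarrow> s mod k \<noteq> s' mod k"
  shows "\<exists>C. total_perfect_code n S C"
proof -
  have fin: "finite S" using assms(2) finite_subset by blast
  have kpos: "k > 0"
  proof (rule ccontr)
    assume "\<not> k > 0"
    then have "S = {}" using fin assms(6) by auto
    then have na: "\<And>u v. \<not> circ_adj n S u v" by (simp add: circ_adj_def)
    have "(circ_adj n S)\<^sup>*\<^sup>* 0 1" using assms(1,5) unfolding circ_connected_def by auto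
    then have "(0::nat) = 1"
      by (cases rule: converse_rtranclpE) (use na in auto)
    then show False by simp
  qed
  obtain q where nq: "n = k * q" using assms(7) by blast
  define C where "C = {c. c < n \<and> k dvd c}"
  have "total_perfect_code n S C"
    unfolding total_perfect_code_def
  proof (intro conjI allI impI)
    show "C \<subseteq> {0..<n}" unfolding C_def by auto
  next
    fix v assume v: "v < n"
    obtain s where s: "s \<in> S" "s mod k = (k - v mod k) mod k"
      using surj_mod[OF fin assms(6) kpos assms(8), of "(k - v mod k) mod k"] kpos by auto
    have sn: "s < n" using s assms(2) by auto
    define c where "c = (v + s) mod n"
    have cn: "c < n" unfolding c_def using v by auto
    have "k dvd c"
    proof -
      have "c mod k = (v + s) mod k" unfolding c_def using assms(7) by (simp add: mod_mod_cancel)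
      also have "\<dots> = (v mod k + s mod k) mod k" by (simp add: mod_add_eq)
      also have "\<dots> = (v mod k + (k - v mod k)) mod k" using s(2) by (simp add: mod_add_right_eq)
      also have "\<dots> = 0" using kpos by (simp add: less_imp_le)
      finally show ?thesis by auto
    qed
    have adj: "circ_adj n S v c"
    proof -
      have ic: "int c = (int v + int s) mod int n" unfolding c_def by (simp add: of_nat_mod)
      have "(int c - int v) mod int n = ((int v + int s) mod int n - int v) mod int n" using ic by simp
      also have "\<dots> = (int v + int s - int v) mod int n" by (rule mod_diff_left_eq)
      also have "\<dots> = int s mod int n" by simp
      finally have "(int c - int v) mod int n = int s mod int n" .
      also have "\<dots> = int s" using sn by simp
      finally show ?thesis unfolding circ_adj_def using v cn s(1) by simp
    qed
    show "\<exists>!c. c \<in> C \<and> circ_adj n S v c"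
    proof (rule ex1I[of _ c])
      show "c \<in> C \<and> circ_adj n S v c" using adj cn \<open>k dvd c\<close> C_def by auto
    next
      fix c' assume c': "c' \<in> C \<and> circ_adj n S v c'"
      define d where "d = (int c' - int v) mod int n"
      define e where "e = (int c - int v) mod int n"
      have d0: "d \<ge> 0" "e \<ge> 0" using v unfolding d_def e_def by auto
      have dS: "nat d \<in> S" "nat e \<in> S" using c' adj unfolding circ_adj_def d_def e_def by auto
      have kdn: "int k dvd int n" using assms(7) by simp
      have "d mod int k = (int c' - int v) mod int k"
        unfolding d_def using kdn by (simp add: mod_mod_cancel)
      also have "\<dots> = (0 - int v) mod int k"
      proof -
        have "int k dvd int c'" using c' C_def by simp
        then have "int c' mod int k = 0" by simp
        then show ?thesis by (metis mod_diff_left_eq)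
      qed
      finally have dk: "d mod int k = (0 - int v) mod int k" .
      have "e mod int k = (int c - int v) mod int k"
        unfolding e_def using kdn by (simp add: mod_mod_cancel)
      also have "\<dots> = (0 - int v) mod int k"
      proof -
        have "int k dvd int c" using \<open>k dvd c\<close> by simp
        then have "int c mod int k = 0" by simp
        then show ?thesis by (metis mod_diff_left_eq)
      qed
      finally have ek: "e mod int k = (0 - int v) mod int k" .
      have "nat d mod k = nat e mod k"
      proof -
        have "nat d mod k = nat (d mod int k)" using d0 by (simp add: nat_mod_distrib)
        moreover have "nat e mod k = nat (e mod int k)" using d0 by (simp add: nat_mod_distrib)
        ultimately show ?thesis using dk ek by simp
      qed
      then have "nat d = nat e" using assms(8) dS by blast
      then have "d = e" using d0 by simp
      then have "int c' mod int n = int c mod int n"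
        unfolding d_def e_def by (metis diff_add_cancel mod_add_left_eq)
      then have "int c' = int c" using c' cn C_def by simp
      then show "c' = c" by simp
    qed
  qed
  then show ?thesis by blast
qed

end
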